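(* If $\theta_0,\theta_1\in V_\Lambda\setminus\mathcal W(\mathcal G)$ lie in the same path component of $V_\Lambda\setminus\mathcal W(\mathcal G)$, then $\mathcal P(\theta_0)=\mathcal P(\theta_1)$.
   Context: Let $\Lambda$ be a finite dimensional algebra over a field with $n$ isoclasses of simple modules, and $\mathrm{mod}\text-\Lambda$ the category of finitely generated right $\Lambda$-modules. Fix a torsion class $\mathcal G\subseteq\mathrm{mod}\text-\Lambda$ (closed under isomorphisms, extensions and quotients). For $B\in\mathcal G$, a subobject of $B$ is a submodule in $\mathcal G$; a subobject $A\subseteq B$ is strict if $A\cap B'\in\mathcal G$ for every subobject $B'$ of $B$; a strict quotient of $B$ is $B/A$ with $A$ a strict subobject. Let $V_\Lambda=\mathrm{Hom}_{\mathbb Z}(K_0\Lambda,\mathbb R)\cong\mathbb R^n$ (with its Euclidean topology); $\theta(M)$ denotes $\theta$ applied to the dimension vector of $M$. For $M\in\mathcal G$, the pseudo-wall $D_{\mathcal G}(M)$ is the set of $\theta\in V_\Lambda$ with $\theta(M)=0$ and $\theta(M')\le0$ for every strict subobject $M'$ of $M$. $\mathcal W(\theta)$ is the class of $X\in\mathcal G$ with $\theta\in D_{\mathcal G}(X)$, and $\mathcal W(\mathcal G)$ is the set of $\theta$ with $\mathcal W(\theta)\ne\{0\}$, equivalently the union of the $D_{\mathcal G}(M)$ over nonzero $M\in\mathcal G$. $\mathcal P(\theta)$ is the class consisting of $0$ and all nonzero $M\in\mathcal G$ such that $\theta(M'')>0$ for every nonzero strict quotient $M''$ of $M$ (including $M''=M$).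 *)

theory Defs
  imports "HOL-Analysis.Analysis"
begin

(* Ambient k-vector space used as universe for carriers of modules:
   functions nat => 'k with pointwise operations.  Every finite-dimensional
   k-vector space is isomorphic to a subspace of it. *)
definition vzero :: "nat \<Rightarrow> 'k::field" where "vzero = (\<lambda>i. 0)"
definition vadd :: "(nat \<Rightarrow> 'k::field) \<Rightarrow> (nat \<Rightarrow> 'k) \<Rightarrow> (nat \<Rightarrow> 'k)"
  where "vadd v w = (\<lambda>i. v i + w i)"
definition vsc :: "'k::field \<Rightarrow> (nat \<Rightarrow> 'k) \<Rightarrow> (nat \<Rightarrow> 'k)"
  where "vsc c v = (\<lambda>i. c * v i)"

definition vsubspace :: "(nat \<Rightarrow> 'k::field) set \<Rightarrow> bool" where
  "vsubspace V \<longleftrightarrow> vzero \<in> V \<and> (\<forall>v\<in>V. \<forall>w\<in>V. vadd v w \<in> V) \<and> (\<forall>c. \<forall>v\<in>V. vsc c v \<in> V)"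

definition vfin_dim :: "(nat \<Rightarrow> 'k::field) set \<Rightarrow> bool" where
  "vfin_dim V \<longleftrightarrow> (\<exists>B. finite B \<and> B \<subseteq> V \<and>
      (\<forall>v\<in>V. \<exists>c. v = (\<lambda>i. \<Sum>b\<in>B. c b * b i)))"

(* Lambda: a finite dimensional algebra over the field 'k, given as a ring 'a
   with a k-scalar multiplication sc *)
definition fd_algebra :: "('k::field \<Rightarrow> 'a::ring_1 \<Rightarrow> 'a) \<Rightarrow> bool" where
  "fd_algebra sc \<longleftrightarrow> vector_space sc \<and>
     (\<forall>c x y. sc c (x * y) = sc c x * y \<and> sc c (x * y) = x * sc c y) \<and>
     (\<exists>B. finite B \<and> module.span sc B = UNIV)"

(* a (right) Lambda-module: carrier subspace V and right action act v a = v.a *)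
type_synonym ('k, 'a) rmod = "(nat \<Rightarrow> 'k) set \<times> ((nat \<Rightarrow> 'k) \<Rightarrow> 'a \<Rightarrow> (nat \<Rightarrow> 'k))"

definition is_module :: "('k::field \<Rightarrow> 'a::ring_1 \<Rightarrow> 'a) \<Rightarrow> ('k, 'a) rmod \<Rightarrow> bool" where
  "is_module sc M \<longleftrightarrow> (case M of (V, act) \<Rightarrow>
     vsubspace V \<and> vfin_dim V \<and>
     (\<forall>v\<in>V. \<forall>a. act v a \<in> V) \<and>
     (\<forall>v\<in>V. act v 1 = v) \<and>
     (\<forall>v\<in>V. \<forall>a b. act v (a * b) = act (act v a) b) \<and>
     (\<forall>v\<in>V. \<forall>w\<in>V. \<forall>a. act (vadd v w) a = vadd (act v a) (act w a)) \<and>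
     (\<forall>v\<in>V. \<forall>a b. act v (a + b) = vadd (act v a) (act v b)) \<and>
     (\<forall>v\<in>V. \<forall>c a. act (vsc c v) a = vsc c (act v a) \<and> act v (sc c a) = vsc c (act v a)))"

definition is_zero_module :: "('k::field, 'a) rmod \<Rightarrow> bool" where
  "is_zero_module M \<longleftrightarrow> fst M = {vzero}"

(* W is (the carrier of) a submodule of M; the submodule itself is (W, snd M) *)
definition is_submod :: "('k::field \<Rightarrow> 'a::ring_1 \<Rightarrow> 'a) \<Rightarrow> ('k, 'a) rmod \<Rightarrow> (nat \<Rightarrow> 'k) set \<Rightarrow> bool" where
  "is_submod sc M W \<longleftrightarrow> is_module sc M \<and> W \<subseteq> fst M \<and> is_module sc (W, snd M)"

definition is_hom :: "('k::field \<Rightarrow> 'a::ring_1 \<Rightarrow> 'a) \<Rightarrow> ('k, 'a) rmod \<Rightarrow> ('k, 'a) rmod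
    \<Rightarrow> ((nat \<Rightarrow> 'k) \<Rightarrow> (nat \<Rightarrow> 'k)) \<Rightarrow> bool" where
  "is_hom sc M N g \<longleftrightarrow> is_module sc M \<and> is_module sc N \<and>
     (\<forall>v\<in>fst M. g v \<in> fst N) \<and>
     (\<forall>v\<in>fst M. \<forall>w\<in>fst M. g (vadd v w) = vadd (g v) (g w)) \<and>
     (\<forall>c. \<forall>v\<in>fst M. g (vsc c v) = vsc c (g v)) \<and>
     (\<forall>a. \<forall>v\<in>fst M. g (snd M v a) = snd N (g v) a)"

(* N is a quotient of M by the submodule A, via the surjection g with kernel A,
   i.e. 0 -> A -> M -> N -> 0 is a short exact sequence *)
definition is_quot :: "('k::field \<Rightarrow> 'a::ring_1 \<Rightarrow> 'a) \<Rightarrow> ('k, 'a) rmod \<Rightarrow> (nat \<Rightarrow> 'k) set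
    \<Rightarrow> ('k, 'a) rmod \<Rightarrow> ((nat \<Rightarrow> 'k) \<Rightarrow> (nat \<Rightarrow> 'k)) \<Rightarrow> bool" where
  "is_quot sc M A N g \<longleftrightarrow> is_submod sc M A \<and> is_hom sc M N g \<and>
     g ` fst M = fst N \<and> {v \<in> fst M. g v = vzero} = A"

definition torsion_class :: "('k::field \<Rightarrow> 'a::ring_1 \<Rightarrow> 'a) \<Rightarrow> ('k, 'a) rmod set \<Rightarrow> bool" where
  "torsion_class sc G \<longleftrightarrow> (\<forall>M\<in>G. is_module sc M) \<and>
     (\<forall>M N g. M \<in> G \<and> is_hom sc M N g \<and> g ` fst M = fst N \<longrightarrow> N \<in> G) \<and>
     (\<forall>M A N g. is_quot sc M A N g \<and> (A, snd M) \<in> G \<and> N \<in> G \<longrightarrow> M \<in> G)"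

definition subobj :: "('k::field \<Rightarrow> 'a::ring_1 \<Rightarrow> 'a) \<Rightarrow> ('k, 'a) rmod set \<Rightarrow> ('k, 'a) rmod
    \<Rightarrow> (nat \<Rightarrow> 'k) set \<Rightarrow> bool" where
  "subobj sc G B A \<longleftrightarrow> is_submod sc B A \<and> (A, snd B) \<in> G"

definition strict_subobj :: "('k::field \<Rightarrow> 'a::ring_1 \<Rightarrow> 'a) \<Rightarrow> ('k, 'a) rmod set \<Rightarrow> ('k, 'a) rmod
    \<Rightarrow> (nat \<Rightarrow> 'k) set \<Rightarrow> bool" where
  "strict_subobj sc G B A \<longleftrightarrow> subobj sc G B A \<and>
     (\<forall>B'. subobj sc G B B' \<longrightarrow> (A \<inter> B', snd B) \<in> G)"

(* V_Lambda = Hom(K_0 Lambda, R): real-valued functions on modules that are additive on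
   short exact sequences (hence isomorphism invariant); normalised to 0 off modules *)
definition VLam :: "('k::field \<Rightarrow> 'a::ring_1 \<Rightarrow> 'a) \<Rightarrow> (('k, 'a) rmod \<Rightarrow> real) set" where
  "VLam sc = {\<theta>. (\<forall>M. \<not> is_module sc M \<longrightarrow> \<theta> M = 0) \<and>
     (\<forall>M A N g. is_quot sc M A N g \<longrightarrow> \<theta> M = \<theta> (A, snd M) + \<theta> N)}"

definition Dwall :: "('k::field \<Rightarrow> 'a::ring_1 \<Rightarrow> 'a) \<Rightarrow> ('k, 'a) rmod set \<Rightarrow> ('k, 'a) rmod
    \<Rightarrow> (('k, 'a) rmod \<Rightarrow> real) set" where
  "Dwall sc G M = {\<theta> \<in> VLam sc. \<theta> M = 0 \<and>
     (\<forall>A. strict_subobj sc G M A \<longrightarrow> \<theta> (A, snd M) \<le> 0)}"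

definition Wall :: "('k::field \<Rightarrow> 'a::ring_1 \<Rightarrow> 'a) \<Rightarrow> ('k, 'a) rmod set
    \<Rightarrow> (('k, 'a) rmod \<Rightarrow> real) set" where
  "Wall sc G = (\<Union>M\<in>{M \<in> G. \<not> is_zero_module M}. Dwall sc G M)"

definition Pcls :: "('k::field \<Rightarrow> 'a::ring_1 \<Rightarrow> 'a) \<Rightarrow> ('k, 'a) rmod set
    \<Rightarrow> (('k, 'a) rmod \<Rightarrow> real) \<Rightarrow> ('k, 'a) rmod set" where
  "Pcls sc G \<theta> = {M. is_module sc M \<and> (is_zero_module M \<or>
     (M \<in> G \<and> (\<forall>A N g. strict_subobj sc G M A \<and> is_quot sc M A N g \<and> \<not> is_zero_module N
          \<longrightarrow> \<theta> N > 0)))}"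

(* theta0, theta1 lie in the same path component of V_Lambda - W(G).  The (Euclidean)
   topology of V_Lambda is the one making every evaluation theta |-> theta(M) continuous. *)
definition same_path_comp :: "('k::field \<Rightarrow> 'a::ring_1 \<Rightarrow> 'a) \<Rightarrow> ('k, 'a) rmod set
    \<Rightarrow> (('k, 'a) rmod \<Rightarrow> real) \<Rightarrow> (('k, 'a) rmod \<Rightarrow> real) \<Rightarrow> bool" where
  "same_path_comp sc G \<theta>0 \<theta>1 \<longleftrightarrow> (\<exists>\<gamma> :: real \<Rightarrow> ('k, 'a) rmod \<Rightarrow> real.
     \<gamma> 0 = \<theta>0 \<and> \<gamma> 1 = \<theta>1 \<and>
     (\<forall>t\<in>{0..1}. \<gamma> t \<in> VLam sc - Wall sc G) \<and>
     (\<forall>M. continuous_on {0..1} (\<lambda>t. \<gamma> t M)))"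

end

theory Submission imports Defs "HOL-Library.Function_Algebras" begin

lemma vzero_eq: "vzero = (0 :: nat \<Rightarrow> 'k::field)" by (simp add: vzero_def fun_eq_iff)
lemma vadd_eq: "vadd v w = v + (w:: nat \<Rightarrow> 'k::field)" by (simp add: vadd_def plus_fun_def)

interpretation VS: vector_space "vsc :: 'k::field \<Rightarrow> (nat \<Rightarrow> 'k) \<Rightarrow> (nat \<Rightarrow> 'k)"
  by unfold_locales (simp_all add: vsc_def fun_eq_iff algebra_simps)

lemma vsp: "vector_space_pair (vsc :: 'k::field \<Rightarrow> (nat \<Rightarrow> 'k) \<Rightarrow> (nat \<Rightarrow> 'k)) vsc"
  by (simp add: vector_space_pair_def VS.vector_space_axioms)

lemma vsubspace_eq: "vsubspace V \<longleftrightarrow> VS.subspace (V :: (nat \<Rightarrow> 'k::field) set)"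
  by (simp add: vsubspace_def VS.subspace_def vzero_eq vadd_eq)

lemma sum_fun_apply': "(\<Sum>b\<in>B. f b) (i::nat) = (\<Sum>b\<in>B. f b i)"
  by (induction B rule: infinite_finite_induct) auto

lemma vfin_dim_eq: "vfin_dim V \<longleftrightarrow> (\<exists>B. finite B \<and> B \<subseteq> V \<and> V \<subseteq> VS.span (B :: (nat \<Rightarrow> 'k::field) set))"
proof -
  have "VS.span B = {v. \<exists>c. v = (\<lambda>i. \<Sum>b\<in>B. c b * b i)}" if "finite B" for B :: "(nat \<Rightarrow> 'k) set"
  proof -
    have e: "(\<Sum>v\<in>B. vsc (u v) v) = (\<lambda>i. \<Sum>b\<in>B. u b * b i)" for u :: "(nat \<Rightarrow> 'k) \<Rightarrow> 'k"
      by (simp add: fun_eq_iff sum_fun_apply' vsc_def)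
    show ?thesis using that by (simp add: VS.span_finite e image_def) 
  qed
  note sp = this
  show ?thesis
  proof
    assume "vfin_dim V"
    then obtain B where B: "finite B" "B \<subseteq> V" "\<forall>v\<in>V. \<exists>c. v = (\<lambda>i. \<Sum>b\<in>B. c b * b i)"
      unfolding vfin_dim_def by blast
    have "V \<subseteq> VS.span B" using B(3) unfolding sp[OF B(1)] by blast
    then show "\<exists>B. finite B \<and> B \<subseteq> V \<and> V \<subseteq> VS.span B" using B by blast
  next
    assume "\<exists>B. finite B \<and> B \<subseteq> V \<and> V \<subseteq> VS.span B"
    then obtain B where B: "finite B" "B \<subseteq> V" "V \<subseteq> VS.span B" by blast
    have "\<forall>v\<in>V. \<exists>c. v = (\<lambda>i. \<Sum>b\<in>B. c b * b i)" using B(3) unfolding sp[OF B(1)] by blast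
    then show "vfin_dim V" unfolding vfin_dim_def using B by blast
  qed
qed


lemma fin_indep:
  assumes "vfin_dim V" "VS.independent B" "B \<subseteq> (V :: (nat \<Rightarrow> 'k::field) set)"
  shows "finite B"
proof -
  obtain T where T: "finite T" "T \<subseteq> V" "V \<subseteq> VS.span T" using assms(1) vfin_dim_eq by blast
  show ?thesis using VS.independent_span_bound[OF T(1) assms(2)] assms(3) T(3) by blast
qed

lemma fd_sub:
  assumes "vfin_dim V" "W \<subseteq> (V :: (nat \<Rightarrow> 'k::field) set)"
  shows "vfin_dim W"
proof -
  obtain B where B: "B \<subseteq> W" "VS.independent B" "W \<subseteq> VS.span B" by (meson VS.basis_exists)
  have "finite B" using fin_indep[OF assms(1) B(2)] B(1) assms(2) by blast
  then show ?thesis using B vfin_dim_eq by blast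
qed

lemma dim_less:
  assumes "vfin_dim V" "VS.subspace W" "W \<subset> (V :: (nat \<Rightarrow> 'k::field) set)"
  shows "VS.dim W < VS.dim V"
proof -
  obtain B where B: "B \<subseteq> W" "VS.independent B" "W \<subseteq> VS.span B" "card B = VS.dim W" by (meson VS.basis_exists)
  obtain C where C: "C \<subseteq> V" "VS.independent C" "V \<subseteq> VS.span C" "card C = VS.dim V" by (meson VS.basis_exists)
  have fB: "finite B" using fin_indep[OF assms(1) B(2)] B(1) assms(3) by blast
  have fC: "finite C" using fin_indep[OF assms(1) C(2) C(1)] .
  obtain x where x: "x \<in> V" "x \<notin> W" using assms(3) by blast
  have "VS.span B \<subseteq> W" using VS.span_minimal[OF B(1) assms(2)] .
  then have "x \<notin> VS.span B" using x by blast
  then have ind: "VS.independent (insert x B)" using VS.independent_insertI B(2) by blast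
  have "insert x B \<subseteq> VS.span C" using C(3) x(1) B(1) assms(3) by blast
  then have "card (insert x B) \<le> card C" using VS.independent_span_bound[OF fC ind] by blast
  moreover have "x \<notin> B" using \<open>x \<notin> VS.span B\<close> VS.span_superset[of B] by blast
  then have "card (insert x B) = card B + 1" using fB by simp
  ultimately show ?thesis using B(4) C(4) by linarith
qed

lemma proj_exists:
  assumes V: "VS.subspace V" "vfin_dim V" and A: "VS.subspace A" "A \<subseteq> (V :: (nat \<Rightarrow> 'k::field) set)"
  obtains p where "\<And>x y. p (x + y) = p x + p y" "\<And>c x. p (vsc c x) = vsc c (p x)"
    "\<And>v. v\<in>V \<Longrightarrow> p v \<in> V" "\<And>v. v\<in>V \<Longrightarrow> v - p v \<in> A" "\<And>v. v\<in>A \<Longrightarrow> p v = 0"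
    "\<And>v. v\<in>V \<Longrightarrow> p (p v) = p v"
proof -
  obtain BA where BA: "BA \<subseteq> A" "VS.independent BA" "A \<subseteq> VS.span BA" by (meson VS.basis_exists)
  obtain B where B: "BA \<subseteq> B" "B \<subseteq> V" "VS.independent B" "V \<subseteq> VS.span B"
    using VS.maximal_independent_subset_extend[of BA V] BA A(2) by blast
  define p where "p = vector_space_pair.construct vsc vsc B (\<lambda>b. if b \<in> BA then 0 else b)"
  have lin: "Vector_Spaces.linear vsc vsc p" unfolding p_def using vector_space_pair.linear_construct[OF vsp B(3)] .
  have padd: "p (x + y) = p x + p y" for x y using lin unfolding Vector_Spaces.linear_iff by blast
  have psc: "p (vsc c x) = vsc c (p x)" for c x using lin unfolding Vector_Spaces.linear_iff by blast
  have pb: "b \<in> B \<Longrightarrow> p b = (if b \<in> BA then 0 else b)" for b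
    unfolding p_def using vector_space_pair.construct_basis[OF vsp B(3)] by blast
  have p0: "p 0 = 0" using padd[of 0 0] by simp
  have K: "p v \<in> VS.span (B - BA) \<and> v - p v \<in> VS.span BA" if "v \<in> VS.span B" for v
    using that
  proof (induction rule: VS.span_induct_alt)
    case base then show ?case using p0 VS.span_zero by (metis diff_self)
  next
    case (step c x y)
    show ?case
    proof (cases "x \<in> BA")
      case True
      then have "p (vsc c x + y) = p y" using padd psc pb step(1) by (simp add: VS.scale_zero_right)
      moreover have "vsc c x + y - p y = vsc c x + (y - p y)" by simp
      ultimately show ?thesis using step True VS.span_add VS.span_scale VS.span_base by metis
    next
      case False
      then have "p (vsc c x + y) = vsc c x + p y" using padd psc pb step(1) by simp
      moreover have "vsc c x + y - (vsc c x + p y) = y - p y" by simp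
      moreover have "x \<in> B - BA" using False step(1) by blast
      ultimately show ?thesis using step VS.span_add VS.span_scale VS.span_base by metis
    qed
  qed
  have Z: "p v = 0" if "v \<in> VS.span BA" for v
    using that
  proof (induction rule: VS.span_induct_alt)
    case base show ?case by (rule p0)
  next
    case (step c x y)
    have e: "p (vsc c x + y) = vsc c (p x) + p y" using padd psc by metis
    have "p x = 0" using pb[of x] step(1) B(1) by auto
    then show ?case unfolding e step(2) by (metis VS.scale_zero_right add_0)
  qed
  have I: "p v = v" if "v \<in> VS.span (B - BA)" for v
    using that
  proof (induction rule: VS.span_induct_alt)
    case base show ?case by (rule p0)
  next
    case (step c x y)
    have e: "p (vsc c x + y) = vsc c (p x) + p y" using padd psc by metis
    have "p x = x" using pb[of x] step(1) by auto
    then show ?case unfolding e step(2) by simp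
  qed
  have spB: "VS.span B \<subseteq> V" using VS.span_minimal[OF B(2) V(1)] .
  have spBA: "VS.span BA \<subseteq> A" using VS.span_minimal[OF BA(1) A(1)] .
  have spBB: "VS.span (B - BA) \<subseteq> VS.span B" by (rule VS.span_mono) blast
  show ?thesis
  proof
    show "p (x + y) = p x + p y" for x y by (rule padd)
    show "p (vsc c x) = vsc c (p x)" for c x by (rule psc)
    show "v \<in> V \<Longrightarrow> p v \<in> V" for v using K B(4) spB spBB by blast
    show "v \<in> V \<Longrightarrow> v - p v \<in> A" for v using K B(4) spBA by blast
    show "v \<in> A \<Longrightarrow> p v = 0" for v using Z BA(3) by blast
    show "v \<in> V \<Longrightarrow> p (p v) = p v" for v using K B(4) I by blast
  qed
qed


declare vzero_eq [simp] vadd_eq [simp]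

lemma is_module_iff: "is_module sc (V, act) \<longleftrightarrow>
     VS.subspace V \<and> vfin_dim V \<and>
     (\<forall>v\<in>V. \<forall>a. act v a \<in> V) \<and>
     (\<forall>v\<in>V. act v 1 = v) \<and>
     (\<forall>v\<in>V. \<forall>a b. act v (a * b) = act (act v a) b) \<and>
     (\<forall>v\<in>V. \<forall>w\<in>V. \<forall>a. act (v + w) a = act v a + act w a) \<and>
     (\<forall>v\<in>V. \<forall>a b. act v (a + b) = act v a + act v b) \<and>
     (\<forall>v\<in>V. \<forall>c a. act (vsc c v) a = vsc c (act v a) \<and> act v (sc c a) = vsc c (act v a))"
  by (simp add: is_module_def vsubspace_eq)

lemma module_sub:
  assumes "is_module sc (V, act)" "W \<subseteq> V" "VS.subspace W" "\<forall>v\<in>W. \<forall>a. act v a \<in> W"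
  shows "is_module sc (W, act)"
proof -
  have "vfin_dim W" using assms(1,2) fd_sub by (auto simp: is_module_iff)
  then show ?thesis using assms unfolding is_module_iff by blast
qed

lemma submod_intro:
  assumes "is_module sc M" "W \<subseteq> fst M" "VS.subspace W" "\<forall>v\<in>W. \<forall>a. snd M v a \<in> W"
  shows "is_submod sc M W"
  using module_sub[of sc "fst M" "snd M" W] assms by (simp add: is_submod_def)

lemma submod_module: "is_submod sc M W \<Longrightarrow> is_module sc (W, snd M)"
  by (simp add: is_submod_def)

lemma submod_sub: "is_submod sc M W \<Longrightarrow> W \<subseteq> fst M"
  by (simp add: is_submod_def)

lemma submod_subspace: "is_submod sc M W \<Longrightarrow> VS.subspace W"
  by (cases M) (simp add: is_submod_def is_module_iff)

lemma submod_closed: "is_submod sc M W \<Longrightarrow> v \<in> W \<Longrightarrow> snd M v a \<in> W"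
  by (cases M) (simp add: is_submod_def is_module_iff)

lemma submod_M: "is_submod sc M W \<Longrightarrow> is_module sc M"
  by (simp add: is_submod_def)

lemma module_subspace: "is_module sc M \<Longrightarrow> VS.subspace (fst M)"
  by (cases M) (simp add: is_module_iff)

lemma module_fd: "is_module sc M \<Longrightarrow> vfin_dim (fst M)"
  by (cases M) (simp add: is_module_iff)

lemma module_closed: "is_module sc M \<Longrightarrow> v \<in> fst M \<Longrightarrow> snd M v a \<in> fst M"
  by (cases M) (simp add: is_module_iff)

lemma module_addv: "is_module sc M \<Longrightarrow> v \<in> fst M \<Longrightarrow> w \<in> fst M \<Longrightarrow> snd M (v + w) a = snd M v a + snd M w a"
  by (cases M) (simp add: is_module_iff)

lemma submod_inter: "is_submod sc M A \<Longrightarrow> is_submod sc M B \<Longrightarrow> is_submod sc M (A \<inter> B)"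
  by (rule submod_intro) (auto intro: submod_M submod_closed VS.subspace_inter submod_subspace dest: submod_sub)

lemma submod_whole: "is_module sc M \<Longrightarrow> is_submod sc M (fst M)"
  by (cases M) (simp add: is_submod_def)

lemma submod_sum:
  assumes A: "is_submod sc M A" and B: "is_submod sc M B"
  shows "is_submod sc M {x + y | x y. x \<in> A \<and> y \<in> B}"
proof (rule submod_intro)
  have m: "is_module sc M" using A by (rule submod_M)
  have sV: "VS.subspace (fst M)" using m by (rule module_subspace)
  show "is_module sc M" by fact
  show "{x + y |x y. x \<in> A \<and> y \<in> B} \<subseteq> fst M"
    using submod_sub[OF A] submod_sub[OF B] sV VS.subspace_add by blast
  show "VS.subspace {x + y |x y. x \<in> A \<and> y \<in> B}"
    using VS.subspace_sums[OF submod_subspace[OF A] submod_subspace[OF B]] .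
  show "\<forall>v\<in>{x + y |x y. x \<in> A \<and> y \<in> B}. \<forall>a. snd M v a \<in> {x + y |x y. x \<in> A \<and> y \<in> B}"
  proof (intro ballI allI)
    fix v a assume "v \<in> {x + y |x y. x \<in> A \<and> y \<in> B}"
    then obtain x y where xy: "v = x + y" "x \<in> A" "y \<in> B" by blast
    have "snd M v a = snd M x a + snd M y a"
      using module_addv[OF m] xy submod_sub[OF A] submod_sub[OF B] by blast
    then show "snd M v a \<in> {x + y |x y. x \<in> A \<and> y \<in> B}"
      using submod_closed[OF A xy(2)] submod_closed[OF B xy(3)] by blast
  qed
qed

lemma quot_exists:
  assumes A: "is_submod sc M A"
  shows "\<exists>N g. is_quot sc M A N g"
proof -
  obtain V act where M: "M = (V, act)" by (cases M)
  have m: "is_module sc (V, act)" using submod_M[OF A] M by simp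
  have mA: "is_module sc (A, act)" using submod_module[OF A] M by simp
  have AV: "A \<subseteq> V" using submod_sub[OF A] M by simp
  note mi = m[unfolded is_module_iff]
  note mAi = mA[unfolded is_module_iff]
  obtain p where padd: "\<And>x y. p (x + y) = p x + p y" and psc: "\<And>c x. p (vsc c x) = vsc c (p x)"
    and pV: "\<And>v. v\<in>V \<Longrightarrow> p v \<in> V" and pA: "\<And>v. v\<in>V \<Longrightarrow> v - p v \<in> A" and pk: "\<And>v. v\<in>A \<Longrightarrow> p v = 0"
    and pp: "\<And>v. v\<in>V \<Longrightarrow> p (p v) = p v"
    apply (rule proj_exists[of V A])
    using mi mAi AV by auto
  have p0: "p 0 = 0" using padd[of 0 0] by simp
  have cong: "p (act v a) = p (act (p v) a)" if v: "v \<in> V" for v a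
  proof -
    have "act v a = act (p v) a + act (v - p v) a"
      using mi pV[OF v] pA[OF v] AV v by (metis add_diff_cancel_left' diff_add_cancel subsetD)
    moreover have "act (v - p v) a \<in> A" using mAi pA[OF v] by blast
    ultimately show ?thesis using padd pk by simp
  qed
  define N where "N = (p ` V, \<lambda>v a. p (act v a))"
  have sub: "VS.subspace (p ` V)"
    unfolding VS.subspace_def
  proof (intro conjI ballI allI)
    show "0 \<in> p ` V" using p0 mi VS.subspace_0 by (metis image_eqI)
    show "x + y \<in> p ` V" if "x \<in> p ` V" "y \<in> p ` V" for x y
      using that padd mi VS.subspace_add by (smt (verit) image_iff)
    show "vsc c x \<in> p ` V" if "x \<in> p ` V" for c x
      using that psc mi VS.subspace_scale by (smt (verit) image_iff)
  qed
  have pVV: "p ` V \<subseteq> V" using pV by blast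
  have mN: "is_module sc N"
    unfolding N_def is_module_iff
  proof (intro conjI ballI allI)
    show "VS.subspace (p ` V)" by (rule sub)
    show "vfin_dim (p ` V)" using fd_sub pVV mi by blast
    fix u assume "u \<in> p ` V"
    then obtain v where v: "v \<in> V" "u = p v" by blast
    have uV: "u \<in> V" using v pV by blast
    show "p (act u a) \<in> p ` V" for a using mi uV by blast
    show "p (act u 1) = u" using mi uV v pp by simp
    show "p (act u (a * b)) = p (act (p (act u a)) b)" for a b
      using mi uV cong by metis
    show "p (act u (a + b)) = p (act u a) + p (act u b)" for a b
      using mi uV padd by simp
    show "p (act (vsc c u) a) = vsc c (p (act u a))" for c a
      using mi uV psc by simp
    show "p (act u (sc c a)) = vsc c (p (act u a))" for c a
      using mi uV psc by simp
    fix w assume "w \<in> p ` V"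
    then obtain v' where v': "v' \<in> V" "w = p v'" by blast
    have wV: "w \<in> V" using v' pV by blast
    show "p (act (u + w) a) = p (act u a) + p (act w a)" for a
      using mi uV wV padd by simp
  qed
  have hom: "is_hom sc M N p"
    unfolding is_hom_def
  proof (intro conjI ballI allI)
    show "is_module sc M" using m M by simp
    show "is_module sc N" by (rule mN)
    show "p v \<in> fst N" if "v \<in> fst M" for v using that M N_def by simp
    show "p (vadd v w) = vadd (p v) (p w)" for v w using padd by simp
    show "p (vsc c v) = vsc c (p v)" for c v using psc by simp
    show "p (snd M v a) = snd N (p v) a" if "v \<in> fst M" for a v using that M N_def cong by simp
  qed
  have "is_quot sc M A N p"
    unfolding is_quot_def
  proof (intro conjI)
    show "is_submod sc M A" by fact
    show "is_hom sc M N p" by fact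
    show "p ` fst M = fst N" using M N_def by simp
    show "{v \<in> fst M. p v = vzero} = A"
    proof
      show "{v \<in> fst M. p v = vzero} \<subseteq> A" using pA M by fastforce
      show "A \<subseteq> {v \<in> fst M. p v = vzero}" using pk AV M by auto
    qed
  qed
  then show ?thesis by (intro exI)
qed


lemma theta_quot: "\<theta> \<in> VLam sc \<Longrightarrow> is_quot sc M A N g \<Longrightarrow> \<theta> N = \<theta> M - \<theta> (A, snd M)"
proof -
  assume th: "\<theta> \<in> VLam sc" and q: "is_quot sc M A N g"
  from th have "\<forall>M A N g. is_quot sc M A N g \<longrightarrow> \<theta> M = \<theta> (A, snd M) + \<theta> N"
    unfolding VLam_def mem_Collect_eq by (rule conjunct2)
  note all = this
  have "\<theta> M = \<theta> (A, snd M) + \<theta> N" using all[rule_format, OF q] .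
  then show ?thesis by linarith
qed

lemma theta_zero:
  assumes th: "\<theta> \<in> VLam sc" and m: "is_module sc Z" and z: "fst Z = {0}"
  shows "\<theta> Z = 0"
proof -
  have "is_quot sc Z (fst Z) Z id"
    unfolding is_quot_def is_hom_def using m z submod_whole[OF m] by auto
  from theta_quot[OF th this] show ?thesis by simp
qed

lemma hom_zero: "is_hom sc M N g \<Longrightarrow> g 0 = 0"
proof -
  assume h: "is_hom sc M N g"
  have m: "is_module sc M" using h by (simp add: is_hom_def)
  have z: "0 \<in> fst M" using VS.subspace_0[OF module_subspace[OF m]] .
  have ga: "\<forall>v\<in>fst M. \<forall>w\<in>fst M. g (v + w) = g v + g w" using h by (simp add: is_hom_def)
  have "g (0 + 0) = g 0 + g 0" using ga z by blast
  then show ?thesis by simp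
qed

lemma hom_D:
  assumes h: "is_hom sc M N g"
  shows "is_module sc M" "is_module sc N" "\<And>v. v \<in> fst M \<Longrightarrow> g v \<in> fst N"
    "\<And>v w. v \<in> fst M \<Longrightarrow> w \<in> fst M \<Longrightarrow> g (v + w) = g v + g w"
    "\<And>c v. v \<in> fst M \<Longrightarrow> g (vsc c v) = vsc c (g v)"
    "\<And>v a. v \<in> fst M \<Longrightarrow> g (snd M v a) = snd N (g v) a"
  using h unfolding is_hom_def vadd_eq by blast+

lemma quot_D:
  assumes q: "is_quot sc M A N g"
  shows "is_submod sc M A" "is_hom sc M N g" "g ` fst M = fst N" "{v \<in> fst M. g v = 0} = A"
  using q unfolding is_quot_def vzero_eq by blast+
lemma quot_restrict:
  assumes q: "is_quot sc M A N g" and B: "is_submod sc M B"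
  shows "is_quot sc (B, snd M) (A \<inter> B) (g ` B, snd N) g" "is_submod sc N (g ` B)"
proof -
  have h: "is_hom sc M N g" using quot_D[OF q] by blast
  have mM: "is_module sc M" and mN: "is_module sc N" using hom_D[OF h] by blast+
  have BV: "B \<subseteq> fst M" using submod_sub[OF B] .
  have sB: "VS.subspace B" using submod_subspace[OF B] .
  have gB: "g ` B \<subseteq> fst N" using hom_D(3)[OF h] BV by blast
  have gadd: "g (v + w) = g v + g w" if "v \<in> fst M" "w \<in> fst M" for v w using hom_D(4)[OF h that] .
  have gsc: "g (vsc c v) = vsc c (g v)" if "v \<in> fst M" for c v using hom_D(5)[OF h that] .
  have geq: "g (snd M v a) = snd N (g v) a" if "v \<in> fst M" for v a using hom_D(6)[OF h that] .
  show sN: "is_submod sc N (g ` B)"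
  proof (rule submod_intro[OF mN gB])
    show "VS.subspace (g ` B)"
      unfolding VS.subspace_def
    proof (intro conjI ballI allI)
      have "g 0 = 0" using hom_zero[OF h] .
      then show "0 \<in> g ` B" using VS.subspace_0[OF sB] by (metis image_eqI)
      show "x + y \<in> g ` B" if xy: "x \<in> g ` B" "y \<in> g ` B" for x y
      proof -
        obtain v w where vw: "v \<in> B" "w \<in> B" "x = g v" "y = g w" using xy by blast
        have "x + y = g (v + w)" using gadd[of v w] BV vw by (auto simp: subset_iff)
        moreover have "v + w \<in> B" using VS.subspace_add[OF sB] vw by blast
        ultimately show ?thesis by blast
      qed
      show "vsc c x \<in> g ` B" if xy: "x \<in> g ` B" for c x
      proof -
        obtain v where v: "v \<in> B" "x = g v" using xy by blast
        have "vsc c x = g (vsc c v)" using gsc[of v c] BV v by (auto simp: subset_iff)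
        moreover have "vsc c v \<in> B" using VS.subspace_scale[OF sB] v by blast
        ultimately show ?thesis by blast
      qed
    qed
    show "\<forall>v\<in>g ` B. \<forall>a. snd N v a \<in> g ` B"
    proof (intro ballI allI)
      fix v a assume "v \<in> g ` B"
      then obtain x where x: "x \<in> B" "v = g x" by blast
      have "snd N v a = g (snd M x a)" using geq[of x a] BV x by (auto simp: subset_iff)
      moreover have "snd M x a \<in> B" using submod_closed[OF B x(1)] .
      ultimately show "snd N v a \<in> g ` B" by blast
    qed
  qed
  have mB: "is_module sc (B, snd M)" using submod_module[OF B] .
  have AB: "is_submod sc M (A \<inter> B)" using submod_inter[OF quot_D(1)[OF q] B] .
  show "is_quot sc (B, snd M) (A \<inter> B) (g ` B, snd N) g"
    unfolding is_quot_def
  proof (intro conjI)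
    show "is_submod sc (B, snd M) (A \<inter> B)"
      unfolding is_submod_def using mB submod_module[OF AB] by simp
    show "is_hom sc (B, snd M) (g ` B, snd N) g"
      unfolding is_hom_def
    proof (intro conjI ballI allI)
      show "is_module sc (B, snd M)" by (rule mB)
      show "is_module sc (g ` B, snd N)" using submod_module[OF sN] .
      show "g v \<in> fst (g ` B, snd N)" if "v \<in> fst (B, snd M)" for v using that by simp
      show "g (vadd v w) = vadd (g v) (g w)" if "v \<in> fst (B, snd M)" "w \<in> fst (B, snd M)" for v w
        using that BV gadd[of v w] by (auto simp: subset_iff)
      show "g (vsc c v) = vsc c (g v)" if "v \<in> fst (B, snd M)" for c v
        using that BV gsc[of v c] by (auto simp: subset_iff)
      show "g (snd (B, snd M) v a) = snd (g ` B, snd N) (g v) a" if "v \<in> fst (B, snd M)" for a v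
        using that BV geq[of v a] by (auto simp: subset_iff)
    qed
    show "g ` fst (B, snd M) = fst (g ` B, snd N)" by simp
    have ker: "{v \<in> fst M. g v = 0} = A" using quot_D(4)[OF q] .
    show "{v \<in> fst (B, snd M). g v = vzero} = A \<inter> B"
      using ker BV by auto
  qed
qed

definition lin_eval :: "((('k::field, 'a::ring_1) rmod \<Rightarrow> real) \<Rightarrow> real) \<Rightarrow> bool" where
  "lin_eval f \<longleftrightarrow> (\<exists>L. f = (\<lambda>\<theta>. sum_list (map (\<lambda>(X, c). c * \<theta> X) L)))"

lemma act_zero: "is_module sc M \<Longrightarrow> snd M 0 a = 0"
proof -
  assume m: "is_module sc M"
  have z: "0 \<in> fst M" using VS.subspace_0[OF module_subspace[OF m]] .
  have "snd M (0 + 0) a = snd M 0 a + snd M 0 a" using module_addv[OF m z z] .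
  then show ?thesis by simp
qed

lemma fin_sub:
  assumes "is_module sc M"
  shows "\<exists>F. finite F \<and> (\<forall>f\<in>F. lin_eval f) \<and>
     (\<forall>A. is_submod sc M A \<longrightarrow> (\<exists>f\<in>F. \<forall>\<theta>\<in>VLam sc. \<theta> (A, snd M) = f \<theta>))"
  using assms
proof (induction "VS.dim (fst M)" arbitrary: M rule: less_induct)
  case less
  note mM = less.prems
  show ?case
  proof (cases "fst M = {0}")
    case True
    have "lin_eval (\<lambda>\<theta>. 0 :: real)" unfolding lin_eval_def by (rule exI[of _ "[]"]) simp
    moreover have "\<theta> (A, snd M) = 0" if "is_submod sc M A" "\<theta> \<in> VLam sc" for A \<theta>
    proof (rule theta_zero[OF that(2) submod_module[OF that(1)]])
      show "fst (A, snd M) = {0}"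
        using submod_sub[OF that(1)] True VS.subspace_0[OF submod_subspace[OF that(1)]] by auto
    qed
    ultimately show ?thesis by (intro exI[of _ "{\<lambda>\<theta>. 0}"]) auto
  next
    case False
    define S where "S = {W. is_submod sc M W \<and> W \<noteq> fst M}"
    have sM: "VS.subspace (fst M)" using module_subspace[OF mM] .
    have fdM: "vfin_dim (fst M)" using module_fd[OF mM] .
    have z: "{0} \<in> S" unfolding S_def
    proof (intro CollectI conjI)
      show "is_submod sc M {0}"
      proof (rule submod_intro[OF mM])
        show "{0} \<subseteq> fst M" using VS.subspace_0[OF sM] by blast
        show "VS.subspace {0}" by simp
        show "\<forall>v\<in>{0}. \<forall>a. snd M v a \<in> {0}" using act_zero[OF mM] by simp
      qed
      show "{0} \<noteq> fst M" using False by auto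
    qed
    have dimS: "VS.dim W < VS.dim (fst M)" if "W \<in> S" for W
      using dim_less[OF fdM] that submod_sub submod_subspace unfolding S_def by blast
    have "\<exists>x. x \<in> S \<and> (\<forall>y. y \<in> S \<longrightarrow> VS.dim y \<le> VS.dim x)"
      using Lattices_Big.ex_has_greatest_nat[of "\<lambda>W. W \<in> S" "{0}" VS.dim "VS.dim (fst M) + 1"] z dimS
      by fastforce
    then obtain M' where M': "M' \<in> S" and Mmax: "\<And>W. W \<in> S \<Longrightarrow> VS.dim W \<le> VS.dim M'"
      by blast
    have M'sub: "is_submod sc M M'" using M' unfolding S_def by blast
    have mM': "is_module sc (M', snd M)" using submod_module[OF M'sub] .
    have IH: "\<exists>F. finite F \<and> (\<forall>f\<in>F. lin_eval f) \<and>
     (\<forall>A. is_submod sc (M', snd M) A \<longrightarrow> (\<exists>f\<in>F. \<forall>\<theta>\<in>VLam sc. \<theta> (A, snd (M', snd M)) = f \<theta>))"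
      using less.hyps[OF _ mM'] dimS[OF M'] by simp
    then obtain F' where F'1: "finite F'" and F'2: "\<forall>f\<in>F'. lin_eval f"
      and F'3: "\<forall>A. is_submod sc (M', snd M) A \<longrightarrow> (\<exists>f\<in>F'. \<forall>\<theta>\<in>VLam sc. \<theta> (A, snd M) = f \<theta>)"
      by auto
    obtain N g where q: "is_quot sc M M' N g" using quot_exists[OF M'sub] by blast
    define F where "F = F' \<union> (\<lambda>f \<theta>. f \<theta> + \<theta> M - \<theta> (M', snd M)) ` F'"
    have "finite F" using F'1 unfolding F_def by simp
    moreover have "\<forall>f\<in>F. lin_eval f"
    proof
      fix f assume "f \<in> F"
      then consider "f \<in> F'" | h where "h \<in> F'" "f = (\<lambda>\<theta>. h \<theta> + \<theta> M - \<theta> (M', snd M))"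
        unfolding F_def by blast
      then show "lin_eval f"
      proof cases
        case 1 then show ?thesis using F'2 by blast
      next
        case 2
        obtain L where L: "h = (\<lambda>\<theta>. sum_list (map (\<lambda>(X, c). c * \<theta> X) L))"
          using F'2 2(1) unfolding lin_eval_def by blast
        show ?thesis unfolding lin_eval_def
          by (rule exI[of _ "L @ [(M, 1), ((M', snd M), -1)]"]) (simp add: 2(2) L algebra_simps)
      qed
    qed
    moreover have "\<exists>f\<in>F. \<forall>\<theta>\<in>VLam sc. \<theta> (A, snd M) = f \<theta>" if A: "is_submod sc M A" for A
    proof -
      have AM': "is_submod sc (M', snd M) (A \<inter> M')"
        unfolding is_submod_def using mM' submod_module[OF submod_inter[OF A M'sub]] by simp
      obtain f where f: "f \<in> F'" "\<forall>\<theta>\<in>VLam sc. \<theta> (A \<inter> M', snd M) = f \<theta>"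
        using F'3 AM' by blast
      define K where "K = {x + y | x y. x \<in> A \<and> y \<in> M'}"
      have Ksub: "is_submod sc M K" unfolding K_def using submod_sum[OF A M'sub] .
      have zA: "0 \<in> A" using VS.subspace_0[OF submod_subspace[OF A]] .
      have zM': "0 \<in> M'" using VS.subspace_0[OF submod_subspace[OF M'sub]] .
      have M'K: "M' \<subseteq> K" unfolding K_def using zA by force
      have AK: "A \<subseteq> K"
      proof
        fix x assume xA: "x \<in> A"
        have "x = x + 0 \<and> x \<in> A \<and> 0 \<in> M'" using xA zM' by simp
        then show "x \<in> K" unfolding K_def by blast
      qed
      show ?thesis
      proof (cases "K = fst M")
        case True
        have qA: "is_quot sc (A, snd M) (M' \<inter> A) (g ` A, snd N) g"
          using quot_restrict(1)[OF q A] .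
        have hg: "is_hom sc M N g" using quot_D(2)[OF q] .
        have gM: "g ` fst M = fst N" using quot_D(3)[OF q] .
        have ker: "{v \<in> fst M. g v = 0} = M'" using quot_D(4)[OF q] .
        have "g ` A = fst N"
        proof
          show "g ` A \<subseteq> fst N" using gM submod_sub[OF A] by blast
          show "fst N \<subseteq> g ` A"
          proof
            fix u assume "u \<in> fst N"
            then obtain v where v: "v \<in> fst M" "u = g v" using gM by blast
            then obtain x y where xy: "v = x + y" "x \<in> A" "y \<in> M'" using True unfolding K_def by blast
            have xM: "x \<in> fst M" and yM: "y \<in> fst M" using xy submod_sub[OF A] submod_sub[OF M'sub] by blast+
            have "g v = g x + g y" using hom_D(4)[OF hg xM yM] xy(1) by simp
            moreover have "g y = 0" using ker xy(3) by blast
            ultimately show "u \<in> g ` A" using v xy(2) by simp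
          qed
        qed
        then have NA: "(g ` A, snd N) = N" by simp
        have rel: "\<theta> (A, snd M) = f \<theta> + \<theta> M - \<theta> (M', snd M)" if th: "\<theta> \<in> VLam sc" for \<theta>
        proof -
          have e1: "\<theta> N = \<theta> (A, snd M) - \<theta> (M' \<inter> A, snd M)" using theta_quot[OF th qA] NA by simp
          have e2: "\<theta> N = \<theta> M - \<theta> (M', snd M)" using theta_quot[OF th q] .
          have e3: "\<theta> (M' \<inter> A, snd M) = f \<theta>" using f(2) th by (simp add: Int_commute)
          show ?thesis using e1 e2 e3 by linarith
        qed
        show ?thesis
        proof (rule bexI[of _ "\<lambda>\<theta>. f \<theta> + \<theta> M - \<theta> (M', snd M)"])
          show "(\<lambda>\<theta>. f \<theta> + \<theta> M - \<theta> (M', snd M)) \<in> F" unfolding F_def using f(1) by (rule UnI2[OF imageI])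
          show "\<forall>\<theta>\<in>VLam sc. \<theta> (A, snd M) = f \<theta> + \<theta> M - \<theta> (M', snd M)" using rel by (rule ballI)
        qed
      next
        case False
        have "K \<in> S" unfolding S_def using Ksub False by blast
        then have dK: "VS.dim K \<le> VS.dim M'" using Mmax by blast
        have "M' = K"
        proof (rule ccontr)
          assume "M' \<noteq> K"
          then have "M' \<subset> K" using M'K by blast
          moreover have "vfin_dim K" using fd_sub[OF fdM submod_sub[OF Ksub]] .
          ultimately have "VS.dim M' < VS.dim K" using dim_less submod_subspace[OF M'sub] by blast
          then show False using dK by linarith
        qed
        then have AA: "A \<inter> M' = A" using AK by blast
        show ?thesis
        proof (rule bexI[of _ f])
          show "f \<in> F" unfolding F_def using f(1) by (rule UnI1)
          show "\<forall>\<theta>\<in>VLam sc. \<theta> (A, snd M) = f \<theta>" using f(2) AA by simp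
        qed
      qed
    qed
    ultimately show ?thesis by blast
  qed
qed


lemma tc_mod: "torsion_class sc G \<Longrightarrow> M \<in> G \<Longrightarrow> is_module sc M"
  unfolding torsion_class_def by (elim conjE) (erule bspec)

lemma tc_quot:
  assumes tc: "torsion_class sc G" and "M \<in> G" "is_hom sc M N g" "g ` fst M = fst N"
  shows "N \<in> G"
proof -
  have all: "\<forall>M N g. M \<in> G \<and> is_hom sc M N g \<and> g ` fst M = fst N \<longrightarrow> N \<in> G"
    using tc unfolding torsion_class_def by (elim conjE)
  show ?thesis using all[rule_format, OF conjI[OF assms(2) conjI[OF assms(3,4)]]] .
qed

lemma tc_ext:
  assumes tc: "torsion_class sc G" and "is_quot sc M A N g" "(A, snd M) \<in> G" "N \<in> G"
  shows "M \<in> G"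
proof -
  have all: "\<forall>M A N g. is_quot sc M A N g \<and> (A, snd M) \<in> G \<and> N \<in> G \<longrightarrow> M \<in> G"
    using tc unfolding torsion_class_def by (elim conjE)
  show ?thesis using all[rule_format, OF conjI[OF assms(2) conjI[OF assms(3,4)]]] .
qed

lemma strict_D:
  assumes "strict_subobj sc G M A"
  shows "is_submod sc M A" "(A, snd M) \<in> G" "\<And>B. subobj sc G M B \<Longrightarrow> (A \<inter> B, snd M) \<in> G"
  using assms unfolding strict_subobj_def subobj_def by blast+

lemma quot_nonzero:
  assumes q: "is_quot sc M A N g"
  shows "is_zero_module N \<longleftrightarrow> A = fst M"
proof -
  have gM: "g ` fst M = fst N" using quot_D(3)[OF q] .
  have ker: "{v \<in> fst M. g v = 0} = A" using quot_D(4)[OF q] .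
  have z: "0 \<in> fst M" using VS.subspace_0[OF module_subspace[OF submod_M[OF quot_D(1)[OF q]]]] .
  show ?thesis
  proof
    assume "is_zero_module N"
    then have "fst N = {0}" by (simp add: is_zero_module_def)
    then have "\<forall>v\<in>fst M. g v = 0" using gM by blast
    then show "A = fst M" using ker by blast
  next
    assume "A = fst M"
    then have "\<forall>v\<in>fst M. g v = 0" using ker by blast
    then have "fst N = {0}" using gM z by force
    then show "is_zero_module N" by (simp add: is_zero_module_def)
  qed
qed

lemma P_char:
  assumes th: "\<theta> \<in> VLam sc" and MG: "M \<in> G" and mM: "is_module sc M" and nz: "\<not> is_zero_module M"
  shows "M \<in> Pcls sc G \<theta> \<longleftrightarrow> (\<forall>A. strict_subobj sc G M A \<and> A \<noteq> fst M \<longrightarrow> \<theta> M - \<theta> (A, snd M) > 0)"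
proof
  assume P: "M \<in> Pcls sc G \<theta>"
  then have all: "\<forall>A N g. strict_subobj sc G M A \<and> is_quot sc M A N g \<and> \<not> is_zero_module N \<longrightarrow> \<theta> N > 0"
    using nz unfolding Pcls_def by blast
  show "\<forall>A. strict_subobj sc G M A \<and> A \<noteq> fst M \<longrightarrow> \<theta> M - \<theta> (A, snd M) > 0"
  proof (intro allI impI, elim conjE)
    fix A assume s: "strict_subobj sc G M A" and ne: "A \<noteq> fst M"
    obtain N g where q: "is_quot sc M A N g" using quot_exists[OF strict_D(1)[OF s]] by blast
    have "\<not> is_zero_module N" using quot_nonzero[OF q] ne by blast
    then have "\<theta> N > 0" using all s q by blast
    then show "\<theta> M - \<theta> (A, snd M) > 0" using theta_quot[OF th q] by linarith
  qed
next
  assume R: "\<forall>A. strict_subobj sc G M A \<and> A \<noteq> fst M \<longrightarrow> \<theta> M - \<theta> (A, snd M) > 0"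
  have "\<forall>A N g. strict_subobj sc G M A \<and> is_quot sc M A N g \<and> \<not> is_zero_module N \<longrightarrow> \<theta> N > 0"
  proof (intro allI impI, elim conjE)
    fix A N g assume s: "strict_subobj sc G M A" and q: "is_quot sc M A N g" and nzN: "\<not> is_zero_module N"
    have "A \<noteq> fst M" using quot_nonzero[OF q] nzN by blast
    then have "\<theta> M - \<theta> (A, snd M) > 0" using R s by blast
    then show "\<theta> N > 0" using theta_quot[OF th q] by linarith
  qed
  then show "M \<in> Pcls sc G \<theta>" unfolding Pcls_def using mM MG by blast
qed


lemma wall_lemma:
  assumes tc: "torsion_class sc G" and th: "\<theta> \<in> VLam sc" and MG: "M \<in> G"
    and A0: "strict_subobj sc G M A0" and A0ne: "A0 \<noteq> fst M" and eq: "\<theta> (A0, snd M) = \<theta> M"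
    and le: "\<And>A. strict_subobj sc G M A \<Longrightarrow> A \<noteq> fst M \<Longrightarrow> \<theta> (A, snd M) \<le> \<theta> M"
  shows "\<theta> \<in> Wall sc G"
proof -
  have mM: "is_module sc M" using tc_mod[OF tc MG] .
  have A0s: "is_submod sc M A0" and A0G: "(A0, snd M) \<in> G" using strict_D[OF A0] by blast+
  obtain N g where q: "is_quot sc M A0 N g" using quot_exists[OF A0s] by blast
  have hg: "is_hom sc M N g" using quot_D(2)[OF q] .
  have gM: "g ` fst M = fst N" using quot_D(3)[OF q] .
  have ker: "{v \<in> fst M. g v = 0} = A0" using quot_D(4)[OF q] .
  have NG: "N \<in> G" using tc_quot[OF tc MG hg gM] .
  have Nnz: "\<not> is_zero_module N" using quot_nonzero[OF q] A0ne by blast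
  have thN: "\<theta> N = 0" using theta_quot[OF th q] eq by simp
  have "\<theta> (B', snd N) \<le> 0" if B': "strict_subobj sc G N B'" for B'
  proof -
    have B's: "is_submod sc N B'" and B'G: "(B', snd N) \<in> G" using strict_D[OF B'] by blast+
    have sB': "VS.subspace B'" using submod_subspace[OF B's] .
    define B where "B = {v \<in> fst M. g v \<in> B'}"
    have BM: "B \<subseteq> fst M" unfolding B_def by blast
    have Bsub: "is_submod sc M B"
    proof (rule submod_intro[OF mM BM])
      have sM: "VS.subspace (fst M)" using module_subspace[OF mM] .
      show "VS.subspace B"
        unfolding VS.subspace_def
      proof (intro conjI ballI allI)
        show "0 \<in> B" unfolding B_def using VS.subspace_0[OF sM] VS.subspace_0[OF sB'] hom_zero[OF hg] by simp
        show "x + y \<in> B" if xy: "x \<in> B" "y \<in> B" for x y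
        proof -
          have x: "x \<in> fst M" "g x \<in> B'" and y: "y \<in> fst M" "g y \<in> B'" using xy unfolding B_def by blast+
          have "g (x + y) = g x + g y" using hom_D(4)[OF hg x(1) y(1)] .
          then show ?thesis unfolding B_def using VS.subspace_add[OF sM x(1) y(1)] VS.subspace_add[OF sB' x(2) y(2)] by simp
        qed
        show "vsc c x \<in> B" if xy: "x \<in> B" for c x
        proof -
          have x: "x \<in> fst M" "g x \<in> B'" using xy unfolding B_def by blast+
          have "g (vsc c x) = vsc c (g x)" using hom_D(5)[OF hg x(1)] .
          then show ?thesis unfolding B_def using VS.subspace_scale[OF sM x(1)] VS.subspace_scale[OF sB' x(2)] by simp
        qed
      qed
      show "\<forall>v\<in>B. \<forall>a. snd M v a \<in> B"
      proof (intro ballI allI)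
        fix v a assume "v \<in> B"
        then have v: "v \<in> fst M" "g v \<in> B'" unfolding B_def by blast+
        have "g (snd M v a) = snd N (g v) a" using hom_D(6)[OF hg v(1)] .
        moreover have "snd N (g v) a \<in> B'" using submod_closed[OF B's v(2)] .
        moreover have "snd M v a \<in> fst M" using module_closed[OF mM v(1)] .
        ultimately show "snd M v a \<in> B" unfolding B_def by simp
      qed
    qed
    have A0B: "A0 \<subseteq> B"
    proof
      fix v assume "v \<in> A0"
      then have "v \<in> fst M" "g v = 0" using ker by blast+
      then show "v \<in> B" unfolding B_def using VS.subspace_0[OF sB'] by simp
    qed
    have gB: "g ` B = B'"
    proof
      show "g ` B \<subseteq> B'" unfolding B_def by blast
      show "B' \<subseteq> g ` B"
      proof
        fix w assume w: "w \<in> B'"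
        then have "w \<in> fst N" using submod_sub[OF B's] by blast
        then obtain v where "v \<in> fst M" "w = g v" using gM by blast
        then show "w \<in> g ` B" unfolding B_def using w by blast
      qed
    qed
    have qB0: "is_quot sc (B, snd M) (A0 \<inter> B) (g ` B, snd N) g" using quot_restrict(1)[OF q Bsub] .
    have qB: "is_quot sc (B, snd M) A0 (B', snd N) g"
    proof -
      have "A0 \<inter> B = A0" using A0B by blast
      then show ?thesis using qB0 gB by simp
    qed
    have BG: "(B, snd M) \<in> G" using tc_ext[OF tc qB] A0G B'G by simp
    have Bstrict: "strict_subobj sc G M B"
      unfolding strict_subobj_def
    proof (intro conjI allI impI)
      show "subobj sc G M B" unfolding subobj_def using Bsub BG by blast
      fix B'' assume B'': "subobj sc G M B''"
      have B''s: "is_submod sc M B''" and B''G: "(B'', snd M) \<in> G" using B'' unfolding subobj_def by blast+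
      have q'': "is_quot sc (B'', snd M) (A0 \<inter> B'') (g ` B'', snd N) g" using quot_restrict(1)[OF q B''s] .
      have sN'': "is_submod sc N (g ` B'')" using quot_restrict(2)[OF q B''s] .
      have gB''G: "(g ` B'', snd N) \<in> G"
        using tc_quot[OF tc B''G quot_D(2)[OF q''] quot_D(3)[OF q'']] .
      have I1: "(B' \<inter> g ` B'', snd N) \<in> G"
        using strict_D(3)[OF B'] sN'' gB''G unfolding subobj_def by blast
      have I2: "(A0 \<inter> B'', snd M) \<in> G" using strict_D(3)[OF A0 B''] .
      have BB'': "is_submod sc (B'', snd M) (B \<inter> B'')"
        unfolding is_submod_def using submod_module[OF B''s] submod_module[OF submod_inter[OF Bsub B''s]] by simp
      have q3: "is_quot sc (B \<inter> B'', snd M) ((A0 \<inter> B'') \<inter> (B \<inter> B'')) (g ` (B \<inter> B''), snd N) g"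
        using quot_restrict(1)[OF q'' BB''] by simp
      have e1: "(A0 \<inter> B'') \<inter> (B \<inter> B'') = A0 \<inter> B''" using A0B by blast
      have e2: "g ` (B \<inter> B'') = B' \<inter> g ` B''"
      proof
        show "g ` (B \<inter> B'') \<subseteq> B' \<inter> g ` B''" unfolding B_def by blast
        show "B' \<inter> g ` B'' \<subseteq> g ` (B \<inter> B'')"
        proof
          fix w assume "w \<in> B' \<inter> g ` B''"
          then obtain x where x: "x \<in> B''" "w = g x" "w \<in> B'" by blast
          then have "x \<in> fst M" using submod_sub[OF B''s] by blast
          then have "x \<in> B" unfolding B_def using x by simp
          then show "w \<in> g ` (B \<inter> B'')" using x by blast
        qed
      qed
      have q4: "is_quot sc (B \<inter> B'', snd M) (A0 \<inter> B'') (B' \<inter> g ` B'', snd N) g"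
        using q3 unfolding e1 e2 .
      show "(B \<inter> B'', snd M) \<in> G" using tc_ext[OF tc q4] I1 I2 by simp
    qed
    have tB: "\<theta> (B', snd N) = \<theta> (B, snd M) - \<theta> (A0, snd M)" using theta_quot[OF th qB] by simp
    show ?thesis
    proof (cases "B = fst M")
      case True
      then have "\<theta> (B, snd M) = \<theta> M" by simp
      then show ?thesis using tB eq by linarith
    next
      case False
      then have "\<theta> (B, snd M) \<le> \<theta> M" using le[OF Bstrict] by blast
      then show ?thesis using tB eq by linarith
    qed
  qed
  then have "\<theta> \<in> Dwall sc G N" unfolding Dwall_def using th thN by blast
  then show ?thesis unfolding Wall_def using NG Nnz by blast
qed


lemma lin_eval_cont:
  assumes "lin_eval f" and cont: "\<And>X. continuous_on T (\<lambda>t. \<gamma> t X)"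
  shows "continuous_on T (\<lambda>t. f (\<gamma> t))"
proof -
  obtain L where L: "f = (\<lambda>\<theta>. sum_list (map (\<lambda>(X, c). c * \<theta> X) L))"
    using assms(1) unfolding lin_eval_def by blast
  have "continuous_on T (\<lambda>t. sum_list (map (\<lambda>(X, c). c * \<gamma> t X) L))"
  proof (induction L)
    case Nil then show ?case by simp
  next
    case (Cons a L)
    obtain X c where a: "a = (X, c)" by (cases a)
    have "continuous_on T (\<lambda>t. c * \<gamma> t X + sum_list (map (\<lambda>(X, c). c * \<gamma> t X) L))"
      by (intro continuous_on_add continuous_on_mult continuous_on_const cont Cons.IH)
    then show ?case using a by simp
  qed
  then show ?thesis using L by simp
qed

lemma cont_Min:
  fixes \<phi> :: "'c \<Rightarrow> 'd::topological_space \<Rightarrow> real"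
  assumes "finite S" "S \<noteq> {}" "\<And>f. f \<in> S \<Longrightarrow> continuous_on T (\<phi> f)"
  shows "continuous_on T (\<lambda>t. Min ((\<lambda>f. \<phi> f t) ` S))"
  using assms
proof (induction S rule: finite_ne_induct)
  case (singleton x)
  then show ?case by simp
next
  case (insert x F)
  have e: "(\<lambda>t. Min ((\<lambda>f. \<phi> f t) ` insert x F)) = (\<lambda>t. min (\<phi> x t) (Min ((\<lambda>f. \<phi> f t) ` F)))"
    using insert.hyps by (simp add: fun_eq_iff)
  have c1: "continuous_on T (\<lambda>t. Min ((\<lambda>f. \<phi> f t) ` F))" using insert.IH insert.prems by blast
  have c2: "continuous_on T (\<phi> x)" using insert.prems by blast
  show ?case unfolding e using continuous_on_min[OF c2 c1] by simp
qed

lemma P_transfer: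
  assumes tc: "torsion_class sc G"
    and path: "\<forall>t\<in>{0..1}. \<gamma> t \<in> VLam sc - Wall sc G"
    and cont: "\<forall>X. continuous_on {0..1} (\<lambda>t. \<gamma> t X)"
    and MP: "M \<in> Pcls sc G (\<gamma> 0)"
  shows "M \<in> Pcls sc G (\<gamma> (1::real))"
proof -
  have mM: "is_module sc M" using MP unfolding Pcls_def by blast
  show ?thesis
  proof (cases "is_zero_module M")
    case True
    then show ?thesis using mM unfolding Pcls_def by blast
  next
    case nz: False
    have MG: "M \<in> G" using MP nz unfolding Pcls_def by blast
    obtain F where F1: "finite F" and F2: "\<forall>f\<in>F. lin_eval f"
      and F3: "\<forall>A. is_submod sc M A \<longrightarrow> (\<exists>f\<in>F. \<forall>\<theta>\<in>VLam sc. \<theta> (A, snd M) = f \<theta>)"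
      using fin_sub[OF mM] by blast
    define S where "S = {f \<in> F. \<exists>A. strict_subobj sc G M A \<and> A \<noteq> fst M \<and> (\<forall>\<theta>\<in>VLam sc. \<theta> (A, snd M) = f \<theta>)}"
    have fS: "finite S" using F1 unfolding S_def by simp
    have repr: "\<exists>f\<in>S. \<forall>\<theta>\<in>VLam sc. \<theta> (A, snd M) = f \<theta>" if As: "strict_subobj sc G M A" "A \<noteq> fst M" for A
    proof -
      obtain f where f: "f \<in> F" "\<forall>\<theta>\<in>VLam sc. \<theta> (A, snd M) = f \<theta>" using F3 strict_D(1)[OF As(1)] by blast
      then have "f \<in> S" unfolding S_def using As by blast
      then show ?thesis using f(2) by blast
    qed
    have key: "M \<in> Pcls sc G \<theta> \<longleftrightarrow> (\<forall>f\<in>S. \<theta> M - f \<theta> > 0)" if th: "\<theta> \<in> VLam sc" for \<theta>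
    proof -
      have "(\<forall>A. strict_subobj sc G M A \<and> A \<noteq> fst M \<longrightarrow> \<theta> M - \<theta> (A, snd M) > 0) \<longleftrightarrow> (\<forall>f\<in>S. \<theta> M - f \<theta> > 0)"
      proof
        assume L: "\<forall>A. strict_subobj sc G M A \<and> A \<noteq> fst M \<longrightarrow> \<theta> M - \<theta> (A, snd M) > 0"
        show "\<forall>f\<in>S. \<theta> M - f \<theta> > 0"
        proof
          fix f assume "f \<in> S"
          then obtain A where A: "strict_subobj sc G M A" "A \<noteq> fst M" "\<forall>\<theta>\<in>VLam sc. \<theta> (A, snd M) = f \<theta>"
            unfolding S_def by blast
          have "\<theta> M - \<theta> (A, snd M) > 0" using L A(1,2) by blast
          moreover have "\<theta> (A, snd M) = f \<theta>" using A(3) th by blast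
          ultimately show "\<theta> M - f \<theta> > 0" by simp
        qed
      next
        assume R: "\<forall>f\<in>S. \<theta> M - f \<theta> > 0"
        show "\<forall>A. strict_subobj sc G M A \<and> A \<noteq> fst M \<longrightarrow> \<theta> M - \<theta> (A, snd M) > 0"
        proof (intro allI impI, elim conjE)
          fix A assume A: "strict_subobj sc G M A" "A \<noteq> fst M"
          obtain f where f: "f \<in> S" "\<forall>\<theta>\<in>VLam sc. \<theta> (A, snd M) = f \<theta>" using repr[OF A] by blast
          have "\<theta> M - f \<theta> > 0" using R f(1) by blast
          moreover have "\<theta> (A, snd M) = f \<theta>" using f(2) th by blast
          ultimately show "\<theta> M - \<theta> (A, snd M) > 0" by simp
        qed
      qed
      then show ?thesis using P_char[OF th MG mM nz] by simp
    qed
    have th0: "\<gamma> 0 \<in> VLam sc" and th1: "\<gamma> 1 \<in> VLam sc" using path by auto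
    show ?thesis
    proof (rule ccontr)
      assume notP: "M \<notin> Pcls sc G (\<gamma> 1)"
      have Sne: "S \<noteq> {}"
      proof
        assume "S = {}"
        then show False using notP key[OF th1] by simp
      qed
      define h where "h t = Min ((\<lambda>f. \<gamma> t M - f (\<gamma> t)) ` S)" for t
      have hc: "continuous_on {0..1} h"
        unfolding h_def
      proof (rule cont_Min[OF fS Sne])
        fix f assume fS': "f \<in> S"
        have lf: "lin_eval f" using fS' F2 unfolding S_def by blast
        have c1: "continuous_on {0..1} (\<lambda>t. \<gamma> t M)" using cont by blast
        have c2: "continuous_on {0..1} (\<lambda>t. f (\<gamma> t))" using lin_eval_cont[OF lf] cont by blast
        show "continuous_on {0..1} (\<lambda>t. \<gamma> t M - f (\<gamma> t))" using continuous_on_diff[OF c1 c2] .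
      qed
      have pos0: "\<forall>f\<in>S. \<gamma> 0 M - f (\<gamma> 0) > 0" using key[OF th0] MP by blast
      have h0: "h 0 > 0" unfolding h_def using pos0 fS Sne by (simp add: Min_gr_iff)
      have neg1: "\<exists>f\<in>S. \<gamma> 1 M - f (\<gamma> 1) \<le> 0" using key[OF th1] notP by (auto simp: not_less)
      have h1: "h 1 \<le> 0" unfolding h_def using neg1 fS Sne by (simp add: Min_le_iff)
      have "\<exists>x\<ge>0. x \<le> 1 \<and> h x = 0"
        using IVT2'[of h 1 0 0, OF h1 less_imp_le[OF h0] _ hc] by simp
      then obtain s where s: "0 \<le> s" "s \<le> 1" "h s = 0" by blast
      define \<theta> where "\<theta> = \<gamma> s"
      have th: "\<theta> \<in> VLam sc" and nW: "\<theta> \<notin> Wall sc G" using path s unfolding \<theta>_def by auto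
      have ge: "\<theta> M - f \<theta> \<ge> 0" if "f \<in> S" for f
      proof -
        have "h s \<le> \<gamma> s M - f (\<gamma> s)" unfolding h_def using fS that by (intro Min_le) auto
        then show ?thesis using s(3) unfolding \<theta>_def by simp
      qed
      have "h s \<in> (\<lambda>f. \<gamma> s M - f (\<gamma> s)) ` S" unfolding h_def using fS Sne by (intro Min_in) auto
      then obtain f0 where f0: "f0 \<in> S" "\<theta> M - f0 \<theta> = 0" using s(3) unfolding \<theta>_def by auto
      then obtain A0 where A0: "strict_subobj sc G M A0" "A0 \<noteq> fst M" "\<forall>\<theta>\<in>VLam sc. \<theta> (A0, snd M) = f0 \<theta>"
        unfolding S_def by blast
      have eq: "\<theta> (A0, snd M) = \<theta> M" using A0(3) th f0(2) by simp
      have le: "\<theta> (A, snd M) \<le> \<theta> M" if As: "strict_subobj sc G M A" "A \<noteq> fst M" for A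
      proof -
        obtain f where f: "f \<in> S" "\<forall>\<theta>\<in>VLam sc. \<theta> (A, snd M) = f \<theta>" using repr[OF As] by blast
        have "\<theta> M - f \<theta> \<ge> 0" using ge f(1) by blast
        moreover have "\<theta> (A, snd M) = f \<theta>" using f(2) th by blast
        ultimately show ?thesis by simp
      qed
      have "\<theta> \<in> Wall sc G" using wall_lemma[OF tc th MG A0(1) A0(2) eq le] by blast
      then show False using nW by blast
    qed
  qed
qed


theorem mainTheorem14:
  fixes sc :: "'k::field \<Rightarrow> 'a::ring_1 \<Rightarrow> 'a"
    and G :: "('k, 'a) rmod set"
    and \<theta>0 \<theta>1 :: "('k, 'a) rmod \<Rightarrow> real"
  assumes "fd_algebra sc"
    and "torsion_class sc G"
    and "\<theta>0 \<in> VLam sc - Wall sc G"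
    and "\<theta>1 \<in> VLam sc - Wall sc G"
    and "same_path_comp sc G \<theta>0 \<theta>1"
  shows "Pcls sc G \<theta>0 = Pcls sc G \<theta>1"
proof -
  obtain \<gamma> :: "real \<Rightarrow> ('k, 'a) rmod \<Rightarrow> real" where g0: "\<gamma> 0 = \<theta>0" and g1: "\<gamma> 1 = \<theta>1"
    and path: "\<forall>t\<in>{0..1}. \<gamma> t \<in> VLam sc - Wall sc G"
    and cont: "\<forall>M. continuous_on {0..1} (\<lambda>t. \<gamma> t M)"
    using assms(5) unfolding same_path_comp_def by blast
  define \<delta> where "\<delta> t = \<gamma> (1 - t)" for t
  have d0: "\<delta> 0 = \<theta>1" and d1: "\<delta> 1 = \<theta>0" unfolding \<delta>_def using g0 g1 by simp_all
  have dpath: "\<forall>t\<in>{0..1}. \<delta> t \<in> VLam sc - Wall sc G"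
  proof
    fix t :: real assume "t \<in> {0..1}"
    then have "1 - t \<in> {0..1}" by simp
    then show "\<delta> t \<in> VLam sc - Wall sc G" unfolding \<delta>_def using path by blast
  qed
  have dcont: "\<forall>M. continuous_on {0..1} (\<lambda>t. \<delta> t M)"
  proof
    fix M
    have c: "continuous_on {0..1} (\<lambda>t. \<gamma> t M)" using cont by blast
    have c2: "continuous_on {0..1::real} (\<lambda>t. 1 - t)" by (intro continuous_intros)
    have im: "(\<lambda>t. 1 - t) ` {0..1::real} \<subseteq> {0..1}" by auto
    show "continuous_on {0..1} (\<lambda>t. \<delta> t M)"
      unfolding \<delta>_def using continuous_on_compose2[OF c c2 im] .
  qed
  show ?thesis
  proof
    show "Pcls sc G \<theta>0 \<subseteq> Pcls sc G \<theta>1"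
      using P_transfer[OF assms(2) path cont] g0 g1 by blast
    show "Pcls sc G \<theta>1 \<subseteq> Pcls sc G \<theta>0"
      using P_transfer[OF assms(2) dpath dcont] d0 d1 by blast
  qed
qed

end
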